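(* Let $k \ge 2$ be an integer. Let $\mathcal{G}$ be a hereditary class of finite simple graphs such that every graph $G \in \mathcal{G}$ contains a $k$-simplicial vertex. Then every graph in $\mathcal{G}$ with at least one edge is $(k+1)$-divisible.
   Context: A class of graphs is hereditary if it is closed under taking induced subgraphs. A vertex $v$ of a graph $G$ is $k$-simplicial if its neighborhood $N_G(v)$ can be partitioned into $k$ (possibly empty) cliques. For an integer $m \ge 2$, a graph $G$ with at least one edge is $m$-divisible if for every induced subgraph $H$ of $G$ with at least one edge, the vertex set $V(H)$ can be partitioned into $m$ sets, none of which contains a maximum clique of $H$ (i.e. none contains a clique of size $\omega(H)$, where $\omega(H)$ is the clique number of $H$). *)

theory Defs
  imports Main
begin

type_synonym 'a graph = "'a set \<times> ('a \<Rightarrow> 'a \<Rightarrow> bool)"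

definition verts :: "'a graph \<Rightarrow> 'a set" where
  "verts G = fst G"

definition adj :: "'a graph \<Rightarrow> 'a \<Rightarrow> 'a \<Rightarrow> bool" where
  "adj G = snd G"

definition finite_simple_graph :: "'a graph \<Rightarrow> bool" where
  "finite_simple_graph G \<longleftrightarrow> finite (verts G)
     \<and> (\<forall>u v. adj G u v \<longrightarrow> u \<in> verts G \<and> v \<in> verts G)
     \<and> (\<forall>u v. adj G u v \<longrightarrow> adj G v u)
     \<and> (\<forall>v. \<not> adj G v v)"

definition induced_subgraph :: "'a graph \<Rightarrow> 'a set \<Rightarrow> 'a graph" where
  "induced_subgraph G S = (S, \<lambda>u v. adj G u v \<and> u \<in> S \<and> v \<in> S)"

definition is_induced_subgraph :: "'a graph \<Rightarrow> 'a graph \<Rightarrow> bool" where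
  "is_induced_subgraph H G \<longleftrightarrow> (\<exists>S. S \<subseteq> verts G \<and> H = induced_subgraph G S)"

definition hereditary :: "('a graph \<Rightarrow> bool) \<Rightarrow> bool" where
  "hereditary \<G> \<longleftrightarrow> (\<forall>G H. \<G> G \<and> is_induced_subgraph H G \<longrightarrow> \<G> H)"

definition has_edge :: "'a graph \<Rightarrow> bool" where
  "has_edge G \<longleftrightarrow> (\<exists>u v. adj G u v)"

definition neighborhood :: "'a graph \<Rightarrow> 'a \<Rightarrow> 'a set" where
  "neighborhood G v = {u \<in> verts G. adj G v u}"

definition is_clique :: "'a graph \<Rightarrow> 'a set \<Rightarrow> bool" where
  "is_clique G K \<longleftrightarrow> K \<subseteq> verts G \<and> (\<forall>u\<in>K. \<forall>w\<in>K. u \<noteq> w \<longrightarrow> adj G u w)"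

definition clique_number :: "'a graph \<Rightarrow> nat" where
  "clique_number G = Max {card K | K. is_clique G K}"

text \<open>v is k-simplicial: N(v) can be partitioned into k (possibly empty) cliques,
  i.e. there is a labelling of N(v) by k labels whose classes are cliques.\<close>
definition k_simplicial :: "nat \<Rightarrow> 'a graph \<Rightarrow> 'a \<Rightarrow> bool" where
  "k_simplicial k G v \<longleftrightarrow>
     (\<exists>f :: 'a \<Rightarrow> nat. (\<forall>u\<in>neighborhood G v. f u < k)
        \<and> (\<forall>i<k. is_clique G {u \<in> neighborhood G v. f u = i}))"

text \<open>V(H) can be partitioned into m (possibly empty) sets none of which contains a
  maximum clique of H.\<close>
definition m_partition_no_max_clique :: "nat \<Rightarrow> 'a graph \<Rightarrow> bool" where
  "m_partition_no_max_clique m H \<longleftrightarrow>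
     (\<exists>f :: 'a \<Rightarrow> nat. (\<forall>v\<in>verts H. f v < m)
        \<and> (\<forall>i<m. \<not> (\<exists>K. is_clique H K \<and> card K = clique_number H
                              \<and> K \<subseteq> {v \<in> verts H. f v = i})))"

definition divisible :: "nat \<Rightarrow> 'a graph \<Rightarrow> bool" where
  "divisible m G \<longleftrightarrow> has_edge G \<and>
     (\<forall>H. is_induced_subgraph H G \<and> has_edge H \<longrightarrow> m_partition_no_max_clique m H)"

end

theory Submission
  imports Defs
begin

lemma verts_ind[simp]: "verts (induced_subgraph G S) = S"
  by (simp add: verts_def induced_subgraph_def)

lemma adj_ind[simp]: "adj (induced_subgraph G S) u w = (adj G u w \<and> u \<in> S \<and> w \<in> S)"
  by (simp add: adj_def induced_subgraph_def)

lemma induced_clique: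
  assumes "S \<subseteq> verts G"
  shows "is_clique (induced_subgraph G S) K \<longleftrightarrow> is_clique G K \<and> K \<subseteq> S"
  using assms unfolding is_clique_def by auto

lemma clique_finite: "finite_simple_graph G \<Longrightarrow> is_clique G K \<Longrightarrow> finite K"
  unfolding finite_simple_graph_def is_clique_def using finite_subset by blast

lemma cn_fin: "finite_simple_graph G \<Longrightarrow> finite {card K | K. is_clique G K}"
proof -
  assume f: "finite_simple_graph G"
  have "{card K | K. is_clique G K} \<subseteq> card ` Pow (verts G)"
    unfolding is_clique_def by auto
  moreover have "finite (verts G)" using f finite_simple_graph_def by blast
  ultimately show ?thesis using finite_subset by blast
qed

lemma cn_ge: "finite_simple_graph G \<Longrightarrow> is_clique G K \<Longrightarrow> card K \<le> clique_number G"
proof -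
  assume f: "finite_simple_graph G" and c: "is_clique G K"
  show ?thesis unfolding clique_number_def
    by (rule Max_ge[OF cn_fin[OF f]]) (use c in blast)
qed

lemma cn_ex: "finite_simple_graph G \<Longrightarrow> \<exists>K. is_clique G K \<and> card K = clique_number G"
proof -
  assume f: "finite_simple_graph G"
  have "is_clique G {}" by (simp add: is_clique_def)
  hence ne: "{card K | K. is_clique G K} \<noteq> {}" by blast
  have "clique_number G \<in> {card K | K. is_clique G K}"
    unfolding clique_number_def using Max_in[OF cn_fin[OF f] ne] .
  thus ?thesis by auto
qed

lemma edge_cn:
  assumes f: "finite_simple_graph G" and e: "has_edge G"
  shows "clique_number G \<ge> 2"
proof -
  obtain u w where a: "adj G u w" using e unfolding has_edge_def by blast
  have "u \<noteq> w" using a f finite_simple_graph_def by metis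
  moreover have "is_clique G {u, w}" using a f unfolding is_clique_def finite_simple_graph_def by auto
  ultimately show ?thesis using cn_ge[OF f] by fastforce
qed

lemma clique_insert:
  assumes C: "is_clique G C" and v: "v \<in> verts G" and av: "\<forall>u\<in>C. adj G v u"
    and sym: "\<And>a b. adj G a b \<Longrightarrow> adj G b a"
  shows "is_clique G (insert v C)"
  unfolding is_clique_def
proof (intro conjI ballI impI)
  show "insert v C \<subseteq> verts G" using C v unfolding is_clique_def by blast
  fix a b assume a: "a \<in> insert v C" and b: "b \<in> insert v C" and ab: "a \<noteq> b"
  show "adj G a b"
  proof (cases "a = v")
    case True
    then have "b \<in> C" using b ab by blast
    then show ?thesis using av True by blast
  next
    case False
    then have aC: "a \<in> C" using a by blast
    show ?thesis
    proof (cases "b = v")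
      case True
      then show ?thesis using av aC sym by blast
    next
      case False
      then have "b \<in> C" using b by blast
      then show ?thesis using C aC ab unfolding is_clique_def by blast
    qed
  qed
qed

lemma simplicial_card:
  assumes fH: "finite_simple_graph H" and vV: "v \<in> verts H" and ks: "k_simplicial k H v"
  shows "card (neighborhood H v) \<le> k * (clique_number H - 1)"
proof -
  obtain g where g1: "\<forall>u\<in>neighborhood H v. g u < k"
    and g2: "\<forall>i<k. is_clique H {u\<in>neighborhood H v. g u = i}"
    using ks unfolding k_simplicial_def by blast
  let ?N = "neighborhood H v"
  have finN: "finite ?N" using fH by (auto simp: finite_simple_graph_def neighborhood_def)
  have each: "card {u\<in>?N. g u = i} \<le> clique_number H - 1" if "i<k" for i
  proof -
    let ?C = "{u\<in>?N. g u = i}"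
    have sym: "\<And>a b. adj H a b \<Longrightarrow> adj H b a" using fH unfolding finite_simple_graph_def by blast
    have Cc: "is_clique H ?C" using g2 that by blast
    have nv: "\<not> adj H v v" using fH unfolding finite_simple_graph_def by blast
    have adjv: "\<forall>u\<in>?C. adj H v u" unfolding neighborhood_def by blast
    have "is_clique H (insert v ?C)" by (rule clique_insert[OF Cc vV adjv sym])
    hence "card (insert v ?C) \<le> clique_number H" by (rule cn_ge[OF fH])
    moreover have "v \<notin> ?C" using nv unfolding neighborhood_def by auto
    moreover have "finite ?C" using finN by simp
    ultimately show ?thesis by simp
  qed
  have "card ?N = card (\<Union>i<k. {u\<in>?N. g u = i})" using g1 by (intro arg_cong[where f=card]) auto
  also have "\<dots> = (\<Sum>i<k. card {u\<in>?N. g u = i})" by (rule card_UN_disjoint) (auto simp: finN)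
  also have "\<dots> \<le> (\<Sum>i<k. clique_number H - 1)" by (rule sum_mono) (use each in auto)
  also have "\<dots> = k * (clique_number H - 1)" by simp
  finally show ?thesis .
qed

lemma main:
  fixes \<G> :: "'a graph \<Rightarrow> bool" and k :: nat
  assumes k1: "k \<ge> 1"
    and fsg: "\<forall>G. \<G> G \<longrightarrow> finite_simple_graph G"
    and her: "hereditary \<G>"
    and simp: "\<forall>G. \<G> G \<and> verts G \<noteq> {} \<longrightarrow> (\<exists>v\<in>verts G. k_simplicial k G v)"
  shows "\<G> H \<Longrightarrow> has_edge H \<Longrightarrow> m_partition_no_max_clique (k+1) H"
proof (induction "card (verts H)" arbitrary: H rule: less_induct)
  case less
  have fH: "finite_simple_graph H" using fsg less.prems by blast
  have finV: "finite (verts H)" using fH finite_simple_graph_def by blast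
  define w where "w = clique_number H"
  have w2: "w \<ge> 2" using edge_cn[OF fH less.prems(2)] w_def by simp
  have "verts H \<noteq> {}" using fH less.prems(2) unfolding has_edge_def finite_simple_graph_def by blast
  then obtain v where vV: "v \<in> verts H" and ks: "k_simplicial k H v" using simp less.prems(1) by blast
  define S where "S = verts H - {v}"
  define H' where "H' = induced_subgraph H S"
  have SV: "S \<subseteq> verts H" by (auto simp: S_def)
  have GH': "\<G> H'" using her less.prems(1) SV
    unfolding hereditary_def is_induced_subgraph_def H'_def by blast
  have fH': "finite_simple_graph H'" using fsg GH' by blast
  have vH': "verts H' = S" by (simp add: H'_def)
  have cardlt: "card (verts H') < card (verts H)" using card_Diff1_less[OF finV vV] vH' S_def
    by simp
  have cl': "\<And>K. is_clique H' K \<longleftrightarrow> is_clique H K \<and> K \<subseteq> S"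
    using induced_clique[OF SV] H'_def by simp
  have w'le: "clique_number H' \<le> w" using cn_ex[OF fH'] cl' cn_ge[OF fH] w_def by metis
  define N where "N = neighborhood H v"
  have finN: "finite N" unfolding N_def neighborhood_def using finV by simp
  have cardN: "card N \<le> k * (w - 1)" using simplicial_card[OF fH vV ks] N_def w_def by simp
  show ?case
  proof (cases "has_edge H' \<and> clique_number H' = w")
    case True
    then obtain f' where f'lt: "\<forall>u\<in>S. f' u < k+1"
      and f'no: "\<forall>i<k+1. \<not>(\<exists>K. is_clique H' K \<and> card K = clique_number H' \<and> K \<subseteq> {u\<in>S. f' u = i})"
      using less.hyps[OF cardlt GH'] vH' unfolding m_partition_no_max_clique_def by auto
    have "\<exists>i<k+1. card {u\<in>N. f' u = i} < w - 1"
    proof (rule ccontr)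
      assume "\<not> ?thesis"
      hence ge: "\<forall>i<k+1. w - 1 \<le> card {u\<in>N. f' u = i}" by auto
      have "(k+1)*(w-1) = (\<Sum>i<k+1. w-1)" by simp
      also have "\<dots> \<le> (\<Sum>i<k+1. card {u\<in>N. f' u = i})"
        by (rule sum_mono) (use ge in auto)
      also have "\<dots> = card (\<Union>i<k+1. {u\<in>N. f' u = i})"
        by (rule card_UN_disjoint[symmetric]) (auto simp: finN)
      also have "\<dots> \<le> card N" by (rule card_mono[OF finN]) auto
      finally have "(k+1)*(w-1) \<le> k * (w-1)" using cardN by simp
      thus False using w2 by simp
    qed
    then obtain i where ik: "i < k+1" and il: "card {u\<in>N. f' u = i} < w - 1" by blast
    define f where "f = f'(v := i)"
    show ?thesis unfolding m_partition_no_max_clique_def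
    proof (intro exI[of _ f] conjI allI impI notI)
      show "\<forall>u\<in>verts H. f u < k+1" using f'lt ik S_def by (auto simp: f_def)
      fix j assume j: "j < k+1"
        and "\<exists>K. is_clique H K \<and> card K = clique_number H \<and> K \<subseteq> {u\<in>verts H. f u = j}"
      then obtain K where Kc: "is_clique H K" and Kw: "card K = w"
        and Ksub: "K \<subseteq> {u\<in>verts H. f u = j}" unfolding w_def by blast
      show False
      proof (cases "v \<in> K")
        case False
        then have "K \<subseteq> {u\<in>S. f' u = j}" using Ksub unfolding S_def f_def by auto
        moreover have "is_clique H' K" using cl' Kc False Ksub S_def by auto
        ultimately show False using f'no j Kw True by auto
      next
        case True
        have ji: "j = i" using Ksub True f_def by auto
        have "K - {v} \<subseteq> {u\<in>N. f' u = i}"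
          using Kc True Ksub ji unfolding N_def neighborhood_def is_clique_def f_def by auto
        hence "card (K - {v}) \<le> card {u\<in>N. f' u = i}" by (intro card_mono) (auto simp: finN)
        moreover have "card (K - {v}) = w - 1" using Kw True clique_finite[OF fH Kc] by simp
        ultimately show False using il by simp
      qed
    qed
  next
    case False
    have noK: "\<not> (\<exists>K. is_clique H K \<and> card K = w \<and> K \<subseteq> S)"
    proof
      assume "\<exists>K. is_clique H K \<and> card K = w \<and> K \<subseteq> S"
      then obtain K where Kc: "is_clique H K" and Kw: "card K = w" and KS: "K \<subseteq> S" by blast
      have Kc': "is_clique H' K" using cl' Kc KS by auto
      have "clique_number H' \<ge> w" using cn_ge[OF fH' Kc'] Kw by simp
      hence eq: "clique_number H' = w" using w'le by simp
      have "card K \<ge> 2" using Kw w2 by simp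
      then obtain a b where "a \<in> K" "b \<in> K" "a \<noteq> b"
        by (metis One_nat_def card.infinite card_le_Suc0_iff_eq not_less_eq_eq numeral_2_eq_2 zero_less_Suc not_le)
      hence "adj H' a b" using Kc' unfolding is_clique_def by blast
      hence "has_edge H'" unfolding has_edge_def by blast
      thus False using False eq by blast
    qed
    define f where "f = (\<lambda>u. if u = v then 0 else (1::nat))"
    show ?thesis unfolding m_partition_no_max_clique_def
    proof (intro exI[of _ f] conjI allI impI notI)
      show "\<forall>u\<in>verts H. f u < k+1" using k1 by (auto simp: f_def)
      fix j assume j: "j < k+1"
        and "\<exists>K. is_clique H K \<and> card K = clique_number H \<and> K \<subseteq> {u\<in>verts H. f u = j}"
      then obtain K where Kc: "is_clique H K" and Kw: "card K = w"
        and Ksub: "K \<subseteq> {u\<in>verts H. f u = j}" unfolding w_def by blast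
      show False
      proof (cases "j = 0")
        case True
        then have "K \<subseteq> {v}" using Ksub unfolding f_def by (auto split: if_splits)
        hence "card K \<le> 1" using card_mono[of "{v}" K] by simp
        thus False using Kw w2 by simp
      next
        case False
        then have "K \<subseteq> S" using Ksub unfolding f_def S_def by (auto split: if_splits)
        thus False using noK Kc Kw by blast
      qed
    qed
  qed
qed

theorem theorem1p5:
  fixes \<G> :: "'a graph \<Rightarrow> bool" and k :: nat
  assumes "k \<ge> 2"
    and "\<forall>G. \<G> G \<longrightarrow> finite_simple_graph G"
    and "hereditary \<G>"
    and "\<forall>G. \<G> G \<and> verts G \<noteq> {} \<longrightarrow> (\<exists>v\<in>verts G. k_simplicial k G v)"
  shows "\<forall>G. \<G> G \<and> has_edge G \<longrightarrow> divisible (k + 1) G"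
proof (intro allI impI)
  fix G assume G: "\<G> G \<and> has_edge G"
  show "divisible (k + 1) G" unfolding divisible_def
  proof (intro conjI allI impI)
    show "has_edge G" using G by blast
    fix H assume H: "is_induced_subgraph H G \<and> has_edge H"
    hence "\<G> H" using G assms(3) unfolding hereditary_def by blast
    thus "m_partition_no_max_clique (k + 1) H"
      using main[of k \<G> H] assms H by simp
  qed
qed

end
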